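(* Let $\mathcal{K}$ be an $N$-dimensional asymptotic class (for some positive integer $N$) of finite trees, viewed as $\mathcal{L}_t$-structures, containing arbitrarily large finite members. Then there is $H<\omega$ such that every $A\in\mathcal{K}$ has height at most $H$.
   Context: Trees: the language $\mathcal{L}_t$ has a binary relation $\le$, a constant $\varepsilon$, a binary function $\sqcap$ and a unary function $\mathtt{pred}$. A tree is an $\mathcal{L}_t$-structure in which $\le$ is a partial order with every downset $\{a:a\le b\}$ well-ordered, $\varepsilon$ is the least element, $a\sqcap a'$ is the greatest common lower bound of $a,a'$, $\mathtt{pred}(a)$ is the greatest element strictly below $a$ for $a\ne\varepsilon$, and $\mathtt{pred}(\varepsilon)=\varepsilon$. The height of an element $a$ is the least $k$ with $\mathtt{pred}^k(a)=\varepsilon$, and the height of a finite tree is the maximum height of its elements. Asymptotic classes: for a positive integer $N$, a class $\mathcal{K}$ of finite $\mathcal{L}$-structures is an $N$-dimensional asymptotic class if for every $\mathcal{L}$-formula $\varphi(x,\bar y)$ with $|\bar y|=m$ there is a finite set of triples $(d_i,\mu_i,\theta_i(\bar y))$, $i<k$, with $d_i\in\{0,\frac1N,\dots,1\}$, $\mu_i\in[0,\infty)$ (with $\mu_i>0$ unless $d_i=0$), and $\theta_i$ $\mathcal{L}$-formulas, such that: (i) the $\theta_i$ partition $A^m$ in every $A\in\mathcal{K}$; (ii) for each $i$ and $\epsilon>0$ there is $M$ such that for all $A\in\mathcal{K}$ with $|A|\ge M$ and $\bar b\in A^m$ with $A\models\theta_i(\bar b)$, $\big||\varphi(A,\bar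 b)|-\mu_i|A|^{d_i}\big|\le\epsilon|A|^{d_i}$. *)

theory Defs
  imports Complex_Main
begin

record 'a lt_struct =
  carrier :: "'a set"
  le :: "'a \<Rightarrow> 'a \<Rightarrow> bool"
  eps :: 'a
  meet :: "'a \<Rightarrow> 'a \<Rightarrow> 'a"
  pred :: "'a \<Rightarrow> 'a"

datatype trm = Var nat | Eps | Meet trm trm | Pred trm

datatype fm = Eq trm trm | Le trm trm | FFalse | Neg fm | Conj fm fm | Disj fm fm
  | Ex nat fm | All nat fm

fun tvars :: "trm \<Rightarrow> nat set" where
  "tvars (Var i) = {i}"
| "tvars Eps = {}"
| "tvars (Meet s t) = tvars s \<union> tvars t"
| "tvars (Pred t) = tvars t"

fun fv :: "fm \<Rightarrow> nat set" where
  "fv (Eq s t) = tvars s \<union> tvars t"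
| "fv (Le s t) = tvars s \<union> tvars t"
| "fv FFalse = {}"
| "fv (Neg f) = fv f"
| "fv (Conj f g) = fv f \<union> fv g"
| "fv (Disj f g) = fv f \<union> fv g"
| "fv (Ex i f) = fv f - {i}"
| "fv (All i f) = fv f - {i}"

fun teval :: "('a, 'b) lt_struct_scheme \<Rightarrow> (nat \<Rightarrow> 'a) \<Rightarrow> trm \<Rightarrow> 'a" where
  "teval A v (Var i) = v i"
| "teval A v Eps = eps A"
| "teval A v (Meet s t) = meet A (teval A v s) (teval A v t)"
| "teval A v (Pred t) = pred A (teval A v t)"

fun sat :: "('a, 'b) lt_struct_scheme \<Rightarrow> (nat \<Rightarrow> 'a) \<Rightarrow> fm \<Rightarrow> bool" where
  "sat A v (Eq s t) = (teval A v s = teval A v t)"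
| "sat A v (Le s t) = le A (teval A v s) (teval A v t)"
| "sat A v FFalse = False"
| "sat A v (Neg f) = (\<not> sat A v f)"
| "sat A v (Conj f g) = (sat A v f \<and> sat A v g)"
| "sat A v (Disj f g) = (sat A v f \<or> sat A v g)"
| "sat A v (Ex i f) = (\<exists>a\<in>carrier A. sat A (v(i := a)) f)"
| "sat A v (All i f) = (\<forall>a\<in>carrier A. sat A (v(i := a)) f)"

text \<open>Convention for a formula phi(x, y_1..y_m): x is variable 0 and y_j is variable j.\<close>

definition env :: "'a \<Rightarrow> 'a list \<Rightarrow> nat \<Rightarrow> 'a" where
  "env x bs = (\<lambda>i. if i = 0 then x else bs ! (i - 1))"

definition tuples :: "('a, 'b) lt_struct_scheme \<Rightarrow> nat \<Rightarrow> 'a list set" where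
  "tuples A m = {bs. length bs = m \<and> set bs \<subseteq> carrier A}"

definition defset :: "('a, 'b) lt_struct_scheme \<Rightarrow> fm \<Rightarrow> 'a list \<Rightarrow> 'a set" where
  "defset A \<phi> bs = {a \<in> carrier A. sat A (env a bs) \<phi>}"

text \<open>theta(bs): a formula with free variables among 1..m (the y's); evaluated
  with the x-slot filled by an arbitrary (irrelevant) value.\<close>
definition sat_par :: "('a, 'b) lt_struct_scheme \<Rightarrow> fm \<Rightarrow> 'a list \<Rightarrow> bool" where
  "sat_par A \<theta> bs = sat A (env (eps A) bs) \<theta>"

definition is_tree :: "('a, 'b) lt_struct_scheme \<Rightarrow> bool" where
  "is_tree A \<longleftrightarrow>
     eps A \<in> carrier A \<and>
     (\<forall>a\<in>carrier A. \<forall>b\<in>carrier A. meet A a b \<in> carrier A) \<and>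
     (\<forall>a\<in>carrier A. pred A a \<in> carrier A) \<and>
     \<comment> \<open>partial order\<close>
     (\<forall>a\<in>carrier A. le A a a) \<and>
     (\<forall>a\<in>carrier A. \<forall>b\<in>carrier A. le A a b \<and> le A b a \<longrightarrow> a = b) \<and>
     (\<forall>a\<in>carrier A. \<forall>b\<in>carrier A. \<forall>c\<in>carrier A. le A a b \<and> le A b c \<longrightarrow> le A a c) \<and>
     \<comment> \<open>every downset is well-ordered (linear, and every nonempty subset has a least element)\<close>
     (\<forall>b\<in>carrier A.
        (\<forall>a\<in>carrier A. \<forall>a'\<in>carrier A. le A a b \<and> le A a' b \<longrightarrow> le A a a' \<or> le A a' a) \<and>
        (\<forall>S. S \<subseteq> {a \<in> carrier A. le A a b} \<and> S \<noteq> {} \<longrightarrow>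
              (\<exists>s\<in>S. \<forall>t\<in>S. le A s t))) \<and>
     \<comment> \<open>eps is the least element\<close>
     (\<forall>a\<in>carrier A. le A (eps A) a) \<and>
     \<comment> \<open>meet is the greatest common lower bound\<close>
     (\<forall>a\<in>carrier A. \<forall>a'\<in>carrier A.
        le A (meet A a a') a \<and> le A (meet A a a') a' \<and>
        (\<forall>c\<in>carrier A. le A c a \<and> le A c a' \<longrightarrow> le A c (meet A a a'))) \<and>
     \<comment> \<open>pred a is the greatest element strictly below a, for a \<noteq> eps\<close>
     (\<forall>a\<in>carrier A. a \<noteq> eps A \<longrightarrow>
        le A (pred A a) a \<and> pred A a \<noteq> a \<and>
        (\<forall>c\<in>carrier A. le A c a \<and> c \<noteq> a \<longrightarrow> le A c (pred A a))) \<and>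
     pred A (eps A) = eps A"

definition elem_height :: "('a, 'b) lt_struct_scheme \<Rightarrow> 'a \<Rightarrow> nat" where
  "elem_height A a = (LEAST k. (pred A ^^ k) a = eps A)"

definition tree_height :: "('a, 'b) lt_struct_scheme \<Rightarrow> nat" where
  "tree_height A = Max (elem_height A ` carrier A)"

definition asymptotic_class :: "nat \<Rightarrow> ('a, 'b) lt_struct_scheme set \<Rightarrow> bool" where
  "asymptotic_class N K \<longleftrightarrow>
     (\<forall>\<phi> m. fv \<phi> \<subseteq> {..m} \<longrightarrow>
        (\<exists>D :: (real \<times> real \<times> fm) list.
           (\<forall>(d, \<mu>, \<theta>) \<in> set D.
              (\<exists>j\<le>N. d = real j / real N) \<and> \<mu> \<ge> 0 \<and> (d \<noteq> 0 \<longrightarrow> \<mu> > 0) \<and>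
              fv \<theta> \<subseteq> {1..m}) \<and>
           \<comment> \<open>(i) the theta_i partition A^m\<close>
           (\<forall>A\<in>K. \<forall>bs\<in>tuples A m.
              \<exists>!i. i < length D \<and> sat_par A (snd (snd (D ! i))) bs) \<and>
           \<comment> \<open>(ii) asymptotic counting\<close>
           (\<forall>i < length D. \<forall>\<epsilon>>0. \<exists>M::nat. \<forall>A\<in>K. card (carrier A) \<ge> M \<longrightarrow>
              (\<forall>bs\<in>tuples A m. sat_par A (snd (snd (D ! i))) bs \<longrightarrow>
                 \<bar>real (card (defset A \<phi> bs))
                    - fst (snd (D ! i)) * real (card (carrier A)) powr fst (D ! i)\<bar>
                 \<le> \<epsilon> * real (card (carrier A)) powr fst (D ! i)))))"

end

theory Submission
  imports Defs
begin

lemma ev_powr: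
  fixes e d c :: real
  assumes "0<e" "0<d"
  shows "\<exists>T::nat. \<forall>n\<ge>T. e * real n powr d > c"
proof -
  define Y where "Y = max 1 (c/e + 1)"
  have Y: "Y > 0" "e * Y > c" using assms unfolding Y_def
    by (auto simp: field_simps max_def)
  show ?thesis
  proof (intro exI allI impI)
    fix n :: nat assume "nat \<lceil>Y powr (1/d)\<rceil> \<le> n"
    hence "Y powr (1/d) \<le> real n" by linarith
    hence "(Y powr (1/d)) powr d \<le> real n powr d"
      using assms by (intro powr_mono2) auto
    also have "(Y powr (1/d)) powr d = Y" using Y assms by (simp add: powr_powr)
    finally show "e * real n powr d > c" using Y assms
      by (smt (verit) mult_left_mono)
  qed
qed

definition ds :: "('a, 'b) lt_struct_scheme \<Rightarrow> 'a \<Rightarrow> 'a set" where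
  "ds A c = {a \<in> carrier A. le A a c}"

context
  fixes A :: "('a, 'b) lt_struct_scheme"
  assumes T: "is_tree A"
begin

lemma tt: "eps A \<in> carrier A \<and>
     (\<forall>a\<in>carrier A. \<forall>b\<in>carrier A. meet A a b \<in> carrier A) \<and>
     (\<forall>a\<in>carrier A. pred A a \<in> carrier A) \<and>
     (\<forall>a\<in>carrier A. le A a a) \<and>
     (\<forall>a\<in>carrier A. \<forall>b\<in>carrier A. le A a b \<and> le A b a \<longrightarrow> a = b) \<and>
     (\<forall>a\<in>carrier A. \<forall>b\<in>carrier A. \<forall>c\<in>carrier A. le A a b \<and> le A b c \<longrightarrow> le A a c) \<and>
     (\<forall>b\<in>carrier A.
        (\<forall>a\<in>carrier A. \<forall>a'\<in>carrier A. le A a b \<and> le A a' b \<longrightarrow> le A a a' \<or> le A a' a) \<and>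
        (\<forall>S. S \<subseteq> {a \<in> carrier A. le A a b} \<and> S \<noteq> {} \<longrightarrow>
              (\<exists>s\<in>S. \<forall>t\<in>S. le A s t))) \<and>
     (\<forall>a\<in>carrier A. le A (eps A) a) \<and>
     (\<forall>a\<in>carrier A. \<forall>a'\<in>carrier A.
        le A (meet A a a') a \<and> le A (meet A a a') a' \<and>
        (\<forall>c\<in>carrier A. le A c a \<and> le A c a' \<longrightarrow> le A c (meet A a a'))) \<and>
     (\<forall>a\<in>carrier A. a \<noteq> eps A \<longrightarrow>
        le A (pred A a) a \<and> pred A a \<noteq> a \<and>
        (\<forall>c\<in>carrier A. le A c a \<and> c \<noteq> a \<longrightarrow> le A c (pred A a))) \<and>
     pred A (eps A) = eps A"
  using T unfolding is_tree_def by (rule HOL.iffD1[OF refl])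

lemma t_eps: "eps A \<in> carrier A" using tt by (elim conjE)
lemma t_pred_all: "\<forall>a\<in>carrier A. pred A a \<in> carrier A" using tt by (elim conjE)
lemma t_pred: "a \<in> carrier A \<Longrightarrow> pred A a \<in> carrier A" using t_pred_all by (rule bspec)
lemma t_refl_all: "\<forall>a\<in>carrier A. le A a a" using tt by (elim conjE)
lemma t_refl: "a \<in> carrier A \<Longrightarrow> le A a a" using t_refl_all by (rule bspec)
lemma t_antisym_all: "\<forall>a\<in>carrier A. \<forall>b\<in>carrier A. le A a b \<and> le A b a \<longrightarrow> a = b"
  using tt by (elim conjE)
lemma t_antisym: "a \<in> carrier A \<Longrightarrow> b \<in> carrier A \<Longrightarrow> le A a b \<Longrightarrow> le A b a \<Longrightarrow> a = b"
  using t_antisym_all by blast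
lemma t_trans_all: "\<forall>a\<in>carrier A. \<forall>b\<in>carrier A. \<forall>c\<in>carrier A. le A a b \<and> le A b c \<longrightarrow> le A a c"
  using tt by (elim conjE)
lemma t_trans: "a \<in> carrier A \<Longrightarrow> b \<in> carrier A \<Longrightarrow> c \<in> carrier A \<Longrightarrow> le A a b \<Longrightarrow> le A b c \<Longrightarrow> le A a c"
  using t_trans_all by blast
lemma t_wo_all: "\<forall>b\<in>carrier A.
        (\<forall>a\<in>carrier A. \<forall>a'\<in>carrier A. le A a b \<and> le A a' b \<longrightarrow> le A a a' \<or> le A a' a) \<and>
        (\<forall>S. S \<subseteq> {a \<in> carrier A. le A a b} \<and> S \<noteq> {} \<longrightarrow>
              (\<exists>s\<in>S. \<forall>t\<in>S. le A s t))"
  using tt by (elim conjE)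
lemma t_wo: "b \<in> carrier A \<Longrightarrow> S \<subseteq> {a \<in> carrier A. le A a b} \<Longrightarrow> S \<noteq> {} \<Longrightarrow> \<exists>s\<in>S. \<forall>t\<in>S. le A s t"
  using t_wo_all by blast
lemma t_least_all: "\<forall>a\<in>carrier A. le A (eps A) a" using tt by (elim conjE)
lemma t_least: "a \<in> carrier A \<Longrightarrow> le A (eps A) a" using t_least_all by (rule bspec)
lemma t_predall: "\<forall>a\<in>carrier A. a \<noteq> eps A \<longrightarrow>
        le A (pred A a) a \<and> pred A a \<noteq> a \<and>
        (\<forall>c\<in>carrier A. le A c a \<and> c \<noteq> a \<longrightarrow> le A c (pred A a))" using tt by (elim conjE)
lemma t_pred1: "a \<in> carrier A \<Longrightarrow> a \<noteq> eps A \<Longrightarrow> le A (pred A a) a \<and> pred A a \<noteq> a"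
  using t_predall by blast
lemma t_pred2: "a \<in> carrier A \<Longrightarrow> a \<noteq> eps A \<Longrightarrow> c \<in> carrier A \<Longrightarrow> le A c a \<Longrightarrow> c \<noteq> a \<Longrightarrow> le A c (pred A a)"
  using t_predall by blast
lemma t_pred_eps: "pred A (eps A) = eps A" using tt by (elim conjE)

lemma t_pred_le: "a \<in> carrier A \<Longrightarrow> le A (pred A a) a"
  by (metis t_pred1 t_pred_eps t_refl)

lemma iter_in: "c \<in> carrier A \<Longrightarrow> (pred A ^^ i) c \<in> carrier A"
  by (induction i) (auto simp: t_pred)

lemma iter_le: "c \<in> carrier A \<Longrightarrow> le A ((pred A ^^ i) c) c"
proof (induction i)
  case 0 then show ?case by (simp add: t_refl)
next
  case (Suc i)
  then show ?case using t_trans[OF t_pred[OF iter_in] iter_in _ t_pred_le[OF iter_in]]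
    by (simp add: Suc.prems)
qed

lemma reach: assumes c: "c \<in> carrier A" shows "\<exists>k. (pred A ^^ k) c = eps A"
proof (rule ccontr)
  assume ne: "\<not> ?thesis"
  let ?S = "range (\<lambda>k. (pred A ^^ k) c)"
  have "?S \<subseteq> {a \<in> carrier A. le A a c}" using iter_in iter_le c by auto
  then obtain s where "s \<in> ?S" and s: "\<forall>t\<in>?S. le A s t" using t_wo[OF c] by blast
  then obtain k where sk: "s = (pred A ^^ k) c" by auto
  have "(pred A ^^ Suc k) c \<in> ?S" by blast
  hence "le A s ((pred A ^^ Suc k) c)" using s by blast
  hence "le A s (pred A s)" using sk by simp
  moreover have "le A (pred A s) s \<and> pred A s \<noteq> s" using t_pred1 iter_in[OF c] sk ne by blast
  ultimately show False using t_antisym t_pred iter_in[OF c] sk by metis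
qed

lemma ds_strict: assumes "x \<in> carrier A" "x \<noteq> eps A" shows "ds A (pred A x) \<subset> ds A x"
proof
  show "ds A (pred A x) \<subseteq> ds A x" unfolding ds_def
    using t_trans[OF _ t_pred[OF assms(1)] assms(1)] t_pred1[OF assms] by auto
  have "x \<in> ds A x" unfolding ds_def using assms t_refl by auto
  moreover have "x \<notin> ds A (pred A x)" unfolding ds_def
    using t_pred1[OF assms] t_antisym[OF assms(1) t_pred[OF assms(1)]] by auto
  ultimately show "ds A (pred A x) \<noteq> ds A x" by blast
qed

lemma ds_sub: assumes x: "x \<in> carrier A"
  shows "\<forall>a\<in>ds A x. le A a ((pred A ^^ j) x) \<or> (\<exists>i<j. a = (pred A ^^ i) x)"
proof (induction j)
  case 0 then show ?case unfolding ds_def by auto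
next
  case (Suc j)
  show ?case
  proof
    fix a assume a: "a \<in> ds A x"
    hence aC: "a \<in> carrier A" unfolding ds_def by auto
    let ?y = "(pred A ^^ j) x"
    have yC: "?y \<in> carrier A" using iter_in x by blast
    consider "\<exists>i<j. a = (pred A ^^ i) x" | "le A a ?y" using Suc a by blast
    then show "le A a ((pred A ^^ Suc j) x) \<or> (\<exists>i<Suc j. a = (pred A ^^ i) x)"
    proof cases
      case 1 then show ?thesis using less_SucI by blast
    next
      case 2
      show ?thesis
      proof (cases "a = ?y")
        case True then show ?thesis by blast
      next
        case False
        show ?thesis
        proof (cases "?y = eps A")
          case True
          then have "a = ?y" using 2 t_least[OF aC] t_antisym[OF aC yC] by simp
          then show ?thesis using False by blast
        next
          case ne: False
          then show ?thesis using t_pred2[OF yC ne aC 2 False] by simp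
        qed
      qed
    qed
  qed
qed

lemma ds_card_le: assumes x: "x \<in> carrier A" and m: "(pred A ^^ m) x = eps A"
  shows "card (ds A x) \<le> m + 1"
proof -
  have "ds A x \<subseteq> (\<lambda>i. (pred A ^^ i) x) ` {..m}"
  proof
    fix a assume a: "a \<in> ds A x"
    hence aC: "a \<in> carrier A" unfolding ds_def by auto
    from ds_sub[OF x, rule_format, OF a, of m]
    show "a \<in> (\<lambda>i. (pred A ^^ i) x) ` {..m}"
    proof
      assume "le A a ((pred A ^^ m) x)"
      hence "a = (pred A ^^ m) x" using m t_least[OF aC] t_antisym[OF aC t_eps] by simp
      thus ?thesis by blast
    qed auto
  qed
  hence "card (ds A x) \<le> card ((\<lambda>i. (pred A ^^ i) x) ` {..m})" by (intro card_mono) auto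
  also have "\<dots> \<le> card {..m}" by (rule card_image_le) simp
  finally show ?thesis by simp
qed

lemma ds_card:
  assumes fin: "finite (carrier A)" and b: "b \<in> carrier A" and h: "h = elem_height A b"
  shows "j \<le> h \<Longrightarrow> card (ds A ((pred A ^^ (h - j)) b)) = j + 1"
proof -
  have hb: "(pred A ^^ h) b = eps A" unfolding h elem_height_def
    by (rule LeastI_ex[OF reach[OF b]])
  have hne: "\<And>i. i < h \<Longrightarrow> (pred A ^^ i) b \<noteq> eps A" unfolding h elem_height_def
    by (rule not_less_Least)
  have up: "j \<le> h \<Longrightarrow> card (ds A ((pred A ^^ (h - j)) b)) \<le> j + 1" for j
  proof -
    assume "j \<le> h"
    hence "j + (h - j) = h" by simp
    have "(pred A ^^ j) ((pred A ^^ (h - j)) b) = (pred A ^^ (j + (h - j))) b"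
      by (simp add: funpow_add)
    hence "(pred A ^^ j) ((pred A ^^ (h - j)) b) = eps A" using hb \<open>j + (h - j) = h\<close> by simp
    thus ?thesis by (rule ds_card_le[OF iter_in[OF b]])
  qed
  have lo: "j \<le> h \<Longrightarrow> card (ds A ((pred A ^^ (h - j)) b)) \<ge> j + 1" for j
  proof (induction j)
    case 0
    have "eps A \<in> ds A ((pred A ^^ h) b)" using hb t_eps t_refl unfolding ds_def by auto
    moreover have "finite (ds A ((pred A ^^ h) b))" using fin unfolding ds_def by auto
    ultimately have "card (ds A ((pred A ^^ h) b)) > 0" by (auto simp: card_gt_0_iff)
    then show ?case by simp
  next
    case (Suc j)
    let ?c = "(pred A ^^ (h - Suc j)) b"
    have cC: "?c \<in> carrier A" using iter_in b by blast
    have cne: "?c \<noteq> eps A" using hne Suc.prems by simp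
    have "Suc (h - Suc j) = h - j" using Suc.prems by simp
    have "pred A ?c = (pred A ^^ Suc (h - Suc j)) b" by simp
    hence "pred A ?c = (pred A ^^ (h - j)) b" using \<open>Suc (h - Suc j) = h - j\<close> by simp
    hence "ds A ((pred A ^^ (h - j)) b) \<subset> ds A ?c" using ds_strict[OF cC cne] by simp
    moreover have "finite (ds A ?c)" using fin unfolding ds_def by auto
    ultimately have "card (ds A ((pred A ^^ (h - j)) b)) < card (ds A ?c)" by (rule psubset_card_mono[rotated])
    moreover have "j + 1 \<le> card (ds A ((pred A ^^ (h - j)) b))" using Suc by simp
    ultimately show ?case by simp
  qed
  show "j \<le> h \<Longrightarrow> card (ds A ((pred A ^^ (h - j)) b)) = j + 1"
    using up[of j] lo[of j] by simp
qed

end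

theorem mainTheorem16:
  fixes K :: "'a lt_struct set" and N :: nat
  assumes "N > 0"
    and "\<forall>A\<in>K. finite (carrier A) \<and> is_tree A"
    and "asymptotic_class N K"
    and "\<forall>n. \<exists>A\<in>K. card (carrier A) \<ge> n"
  shows "\<exists>H::nat. \<forall>A\<in>K. tree_height A \<le> H"
proof (rule ccontr)
  assume nH: "\<not> (\<exists>H::nat. \<forall>A\<in>K. tree_height A \<le> H)"
  define \<phi> where "\<phi> = Le (Var 0) (Var 1)"
  have fv\<phi>: "fv \<phi> \<subseteq> {..1}" by (simp add: \<phi>_def)
  from assms(3)[unfolded asymptotic_class_def, rule_format, OF fv\<phi>]
  obtain D :: "(real \<times> real \<times> fm) list" where
    DD: "(\<forall>(d, \<mu>, \<theta>) \<in> set D. (\<exists>j\<le>N. d = real j / real N) \<and> \<mu> \<ge> 0 \<and> (d \<noteq> 0 \<longrightarrow> \<mu> > 0) \<and> fv \<theta> \<subseteq> {1..1}) \<and>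
    (\<forall>A\<in>K. \<forall>bs\<in>tuples A 1. \<exists>!i. i < length D \<and> sat_par A (snd (snd (D ! i))) bs) \<and>
    (\<forall>i < length D. \<forall>\<epsilon>>0. \<exists>M::nat. \<forall>A\<in>K. card (carrier A) \<ge> M \<longrightarrow>
              (\<forall>bs\<in>tuples A 1. sat_par A (snd (snd (D ! i))) bs \<longrightarrow>
                 \<bar>real (card (defset A \<phi> bs)) - fst (snd (D ! i)) * real (card (carrier A)) powr fst (D ! i)\<bar>
                 \<le> \<epsilon> * real (card (carrier A)) powr fst (D ! i)))"
    ..
  note D1 = DD[THEN conjunct1] and D2 = DD[THEN conjunct2, THEN conjunct1] and D3 = DD[THEN conjunct2, THEN conjunct2]

  define k where "k = length D"
  define d where "d i = fst (D ! i)" for i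
  define mu where "mu i = fst (snd (D ! i))" for i
  define th where "th i = snd (snd (D ! i))" for i
  have dprop: "d i \<ge> 0 \<and> mu i \<ge> 0 \<and> (d i \<noteq> 0 \<longrightarrow> mu i > 0)" if "i < k" for i
  proof -
    have mem: "D ! i \<in> set D" using that by (simp add: k_def)
    obtain x y z where xyz: "D ! i = (x, y, z)" by (cases "D ! i") auto
    have "(\<exists>j\<le>N. x = real j / real N) \<and> y \<ge> 0 \<and> (x \<noteq> 0 \<longrightarrow> y > 0)"
      using mem D1 xyz by fastforce
    then show ?thesis using xyz by (auto simp: d_def mu_def)
  qed
  define P where "P = mu ` {i. i < k \<and> d i \<noteq> 0}"
  have finP: "finite (insert 1 P)" unfolding P_def by simp
  have Ppos: "\<forall>x\<in>insert 1 P. (0::real) < x" unfolding P_def using dprop by auto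
  define e where "e = Min (insert 1 P) / 4"
  have e0: "e > 0" unfolding e_def using Min_gr_iff[OF finP] Ppos by auto
  have e1: "e \<le> 1/4" unfolding e_def using Min_le[OF finP, of 1] by simp
  have emu: "4 * e \<le> mu i" if "i < k" "d i \<noteq> 0" for i
  proof -
    have "mu i \<in> insert 1 P" unfolding P_def using that by auto
    then show ?thesis unfolding e_def using Min_le[OF finP] by simp
  qed
  have "\<forall>i. \<exists>M::nat. i < k \<longrightarrow> (\<forall>A\<in>K. card (carrier A) \<ge> M \<longrightarrow>
              (\<forall>bs\<in>tuples A 1. sat_par A (th i) bs \<longrightarrow>
                 \<bar>real (card (defset A \<phi> bs)) - mu i * real (card (carrier A)) powr d i\<bar>
                 \<le> e * real (card (carrier A)) powr d i))"
    using D3 e0 unfolding k_def th_def mu_def d_def by blast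
  from choice[OF this] obtain Mf where Mf: "\<And>i. i < k \<Longrightarrow> (\<forall>A\<in>K. card (carrier A) \<ge> Mf i \<longrightarrow>
              (\<forall>bs\<in>tuples A 1. sat_par A (th i) bs \<longrightarrow>
                 \<bar>real (card (defset A \<phi> bs)) - mu i * real (card (carrier A)) powr d i\<bar>
                 \<le> e * real (card (carrier A)) powr d i))" by blast
  have "\<forall>i. \<exists>T::nat. i < k \<and> d i \<noteq> 0 \<longrightarrow> (\<forall>n\<ge>T. e * real n powr d i > real k + 1)"
  proof
    fix i
    show "\<exists>T::nat. i < k \<and> d i \<noteq> 0 \<longrightarrow> (\<forall>n\<ge>T. e * real n powr d i > real k + 1)"
    proof (cases "i < k \<and> d i \<noteq> 0")
      case True
      then have "d i > 0" using dprop by force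
      then obtain T :: nat where "\<forall>n\<ge>T. e * real n powr d i > real k + 1"
        using ev_powr[OF e0] by blast
      then show ?thesis by blast
    next
      case False then show ?thesis by blast
    qed
  qed
  from choice[OF this] obtain Tf where Tf: "\<And>i n. i < k \<Longrightarrow> d i \<noteq> 0 \<Longrightarrow> n \<ge> Tf i \<Longrightarrow> e * real n powr d i > real k + 1"
    by blast
  define Tot where "Tot = (\<Sum>i<k. Mf i + Tf i) + k"
  obtain A where AK: "A \<in> K" and hA: "tree_height A > Tot" using nH by (meson not_le)
  have fin: "finite (carrier A)" and tr: "is_tree A" using assms(2) AK by auto
  have Cne: "carrier A \<noteq> {}" using t_eps[OF tr] by blast
  have "tree_height A \<in> elem_height A ` carrier A" unfolding tree_height_def
    using fin Cne by (intro Max_in) auto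
  then obtain b where bC: "b \<in> carrier A" and hb: "elem_height A b = tree_height A" by auto
  define h where "h = elem_height A b"
  define n where "n = card (carrier A)"
  have "card (ds A ((pred A ^^ (h - h)) b)) = h + 1"
    using ds_card[OF tr fin bC h_def, of h] by simp
  hence "card (ds A b) = h + 1" by simp
  moreover have "card (ds A b) \<le> n" unfolding n_def ds_def using fin by (intro card_mono) auto
  ultimately have nh: "n \<ge> h + 1" by simp
  have hT: "h > Tot" using hA hb h_def by simp
  have n0: "n \<noteq> 0" using nh by simp
  have kh: "k \<le> h" using hT unfolding Tot_def by simp
  have Mn: "Mf i \<le> n" and Tn: "Tf i \<le> n" if "i < k" for i
  proof -
    have "Mf i + Tf i \<le> (\<Sum>i<k. Mf i + Tf i)" using that by (intro member_le_sum) auto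
    then show "Mf i \<le> n" "Tf i \<le> n" using hT nh unfolding Tot_def by linarith+
  qed
  define c where "c j = (pred A ^^ (h - j)) b" for j
  have cC: "c j \<in> carrier A" for j unfolding c_def using iter_in[OF tr bC] .
  have tup: "[c j] \<in> tuples A 1" for j unfolding tuples_def using cC by simp
  have cnt: "card (defset A \<phi> [c j]) = j + 1" if "j \<le> k" for j
  proof -
    have "defset A \<phi> [c j] = ds A (c j)"
      unfolding defset_def ds_def \<phi>_def by (simp add: env_def)
    then show ?thesis using ds_card[OF tr fin bC h_def, of j] that kh unfolding c_def by simp
  qed
  have "\<forall>j. \<exists>i. j \<le> k \<longrightarrow> i < k \<and> sat_par A (th i) [c j]"
    using D2 AK tup unfolding k_def th_def by blast
  from choice[OF this] obtain f where f: "\<And>j. j \<le> k \<Longrightarrow> f j < k \<and> sat_par A (th (f j)) [c j]"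
    by blast
  have key: "d (f j) = 0 \<and> \<bar>real j + 1 - mu (f j)\<bar> \<le> e" if "j \<le> k" for j
  proof -
    define i where "i = f j"
    have ik: "i < k" and sp: "sat_par A (th i) [c j]" using f[OF that] i_def by auto
    have est: "\<bar>real j + 1 - mu i * real n powr d i\<bar> \<le> e * real n powr d i"
    proof -
      have "\<bar>real (card (defset A \<phi> [c j])) - mu i * real n powr d i\<bar> \<le> e * real n powr d i"
        using Mf[OF ik, rule_format, OF AK _ tup[of j] sp] Mn[OF ik] unfolding n_def by simp
      then show ?thesis using cnt[OF that] by simp
    qed
    have di: "d i = 0"
    proof (rule ccontr)
      assume dn: "d i \<noteq> 0"
      have big: "e * real n powr d i > real k + 1" using Tf[OF ik dn Tn[OF ik]] .
      define p where "p = real n powr d i"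
      have p0: "p \<ge> 0" unfolding p_def by simp
      have "(4 * e) * p \<le> mu i * p"
        using emu[OF ik dn] p0 by (intro mult_right_mono) auto
      hence m4: "4 * (e * p) \<le> mu i * p" by (simp add: mult.assoc)
      have ep: "e * p \<ge> 0" using e0 p0 by simp
      have jk: "real j \<le> real k" using that by simp
      have est': "\<bar>real j + 1 - mu i * p\<bar> \<le> e * p" using est unfolding p_def .
      have big': "e * p > real k + 1" using big unfolding p_def .
      show False using m4 ep jk est' big' by linarith
    qed
    have "real n powr d i = 1" using di n0 by simp
    then show ?thesis using est di i_def by simp
  qed
  have inj: "inj_on f {..k}"
  proof (rule inj_onI)
    fix j j' assume j: "j \<in> {..k}" and j': "j' \<in> {..k}" and fe: "f j = f j'"
    have "\<bar>real j + 1 - mu (f j)\<bar> \<le> e" "\<bar>real j' + 1 - mu (f j)\<bar> \<le> e"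
      using key[of j] key[of j'] j j' fe by auto
    hence "\<bar>real j - real j'\<bar> < 1" using e1 by linarith
    then show "j = j'" by linarith
  qed
  have "f ` {..k} \<subseteq> {..<k}" using f by auto
  from card_inj_on_le[OF inj this] have "card {..k} \<le> card {..<k}" by simp
  then show False by simp
qed

end
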